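(* Let $n,d\ge1$. For $k\ge1$ let $\mathbf M_k\in\mathbb R^{n\times n}$ be invertible; for $k\ge0$ let $\mathbf H_k\in\mathbb R^{d\times n}$, $\mathbf R_k\in\mathbb R^{d\times d}$ symmetric positive definite and ${\boldsymbol\Omega}_k=\mathbf H_k^{\mathrm T}\mathbf R_k^{-1}\mathbf H_k$. Let $\mathbf M_{k:l}=\mathbf M_k\cdots\mathbf M_{l+1}$ ($\mathbf M_{k:k}=\mathbf I_n$), let $\mathbf P_0$ be symmetric positive semi-definite and $\mathbf P_{k+1}=\mathbf M_{k+1}(\mathbf I_n+\mathbf P_k{\boldsymbol\Omega}_k)^{-1}\mathbf P_k\mathbf M_{k+1}^{\mathrm T}$ for $k\ge0$. Let ${\boldsymbol\Gamma}_k=\sum_{l=0}^{k-1}\mathbf M_{k:l}^{-\mathrm T}{\boldsymbol\Omega}_l\mathbf M_{k:l}^{-1}$. If $\det({\boldsymbol\Gamma}_k)\neq0$, then $\mathbf P_k\le{\boldsymbol\Gamma}_k^{-1}$, and hence $$\mathbf P_k\le\min\big\{\mathbf M_{k:0}\mathbf P_0\mathbf M_{k:0}^{\mathrm T},\,{\boldsymbol\Gamma}_k^{-1}\big\}.$$ Consequently, if there is a symmetric positive definite $\mathbf L$ with ${\boldsymbol\Gamma}_k\ge\mathbf L$, then $\mathbf P_k\le\mathbf L^{-1}$.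
   Context: $\mathbf A\le\mathbf B$ denotes the Loewner order (${\mathbf x}^{\mathrm T}\mathbf A{\mathbf x}\le{\mathbf x}^{\mathrm T}\mathbf B{\mathbf x}$ for all ${\mathbf x}$). For symmetric positive semi-definite $\mathbf A,\mathbf B,\mathbf C$, the statement $\mathbf A\le\min\{\mathbf B,\mathbf C\}$ means ${\mathbf x}^{\mathrm T}\mathbf A{\mathbf x}\le\min\{{\mathbf x}^{\mathrm T}\mathbf B{\mathbf x},{\mathbf x}^{\mathrm T}\mathbf C{\mathbf x}\}$ for all ${\mathbf x}\in\mathbb R^n$. *)

theory Defs
  imports "HOL-Analysis.Analysis"
begin

definition loewner_le :: "real^'n^'n \<Rightarrow> real^'n^'n \<Rightarrow> bool" where
  "loewner_le A B \<longleftrightarrow> (\<forall>x::real^'n. x \<bullet> (A *v x) \<le> x \<bullet> (B *v x))"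

definition sym_mat :: "real^'n^'n \<Rightarrow> bool" where
  "sym_mat A \<longleftrightarrow> transpose A = A"

definition pos_def :: "real^'n^'n \<Rightarrow> bool" where
  "pos_def A \<longleftrightarrow> sym_mat A \<and> (\<forall>x::real^'n. x \<noteq> 0 \<longrightarrow> x \<bullet> (A *v x) > 0)"

definition pos_semidef :: "real^'n^'n \<Rightarrow> bool" where
  "pos_semidef A \<longleftrightarrow> sym_mat A \<and> (\<forall>x::real^'n. x \<bullet> (A *v x) \<ge> 0)"

definition Omega :: "(nat \<Rightarrow> real^'n^'d) \<Rightarrow> (nat \<Rightarrow> real^'d^'d) \<Rightarrow> nat \<Rightarrow> real^'n^'n" where
  "Omega H R k = transpose (H k) ** matrix_inv (R k) ** H k"

text \<open>Propagator M_{k:l} = M_k ... M_{l+1}, with M_{k:k} = I (and I for k < l).\<close>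
fun mprod :: "(nat \<Rightarrow> real^'n^'n) \<Rightarrow> nat \<Rightarrow> nat \<Rightarrow> real^'n^'n" where
  "mprod M 0 l = mat 1"
| "mprod M (Suc k) l = (if Suc k \<le> l then mat 1 else M (Suc k) ** mprod M k l)"

fun Pseq :: "(nat \<Rightarrow> real^'n^'n) \<Rightarrow> (nat \<Rightarrow> real^'n^'d) \<Rightarrow> (nat \<Rightarrow> real^'d^'d)
              \<Rightarrow> real^'n^'n \<Rightarrow> nat \<Rightarrow> real^'n^'n" where
  "Pseq M H R P0 0 = P0"
| "Pseq M H R P0 (Suc k) =
     M (Suc k) ** matrix_inv (mat 1 + Pseq M H R P0 k ** Omega H R k)
       ** Pseq M H R P0 k ** transpose (M (Suc k))"

definition Gamma :: "(nat \<Rightarrow> real^'n^'n) \<Rightarrow> (nat \<Rightarrow> real^'n^'d) \<Rightarrow> (nat \<Rightarrow> real^'d^'d)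
              \<Rightarrow> nat \<Rightarrow> real^'n^'n" where
  "Gamma M H R k = (\<Sum>l<k. transpose (matrix_inv (mprod M k l)) ** Omega H R l
                              ** matrix_inv (mprod M k l))"

end

theory Submission
  imports Defs
begin

declare transpose_matrix_vector[simp del]

lemma inv_props:
  fixes A :: "real^'n^'n"
  assumes "invertible A"
  shows "A ** matrix_inv A = mat 1" "matrix_inv A ** A = mat 1"
  using someI_ex[OF assms[unfolded invertible_def]] unfolding matrix_inv_def by auto

lemma inv_unique:
  fixes A B :: "real^'n^'n"
  assumes "A ** B = mat 1" shows "matrix_inv A = B"
proof -
  have "B ** A = mat 1" using assms matrix_left_right_inverse by blast
  hence inv: "invertible A" using assms invertible_def by blast
  have "matrix_inv A = matrix_inv A ** (A ** B)" using assms by (simp add: matrix_mul_rid)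
  also have "\<dots> = (matrix_inv A ** A) ** B" by (simp add: matrix_mul_assoc)
  also have "\<dots> = B" using inv_props(2)[OF inv] by (simp add: matrix_mul_lid)
  finally show ?thesis .
qed

lemma invertible_ker:
  fixes A :: "real^'n^'n"
  shows "invertible A \<longleftrightarrow> (\<forall>x. A *v x = 0 \<longrightarrow> x = 0)"
  by (simp add: invertible_left_inverse matrix_left_invertible_ker)

lemma dot_transp: "x \<bullet> ((A::real^'n^'m) *v y) = (transpose A *v x) \<bullet> y"
  by (simp add: dot_lmul_matrix transpose_matrix_vector)

lemma sym_dot: "sym_mat (P::real^'n^'n) \<Longrightarrow> x \<bullet> (P *v y) = (P *v x) \<bullet> y"
  by (metis dot_transp sym_mat_def)

lemma inv_transpose:
  fixes A :: "real^'n^'n"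
  assumes "invertible A"
  shows "transpose (matrix_inv A) = matrix_inv (transpose A)"
proof -
  have "transpose A ** transpose (matrix_inv A) = mat 1"
    by (metis inv_props(2) assms matrix_transpose_mul transpose_mat)
  then show ?thesis by (simp add: inv_unique)
qed

lemma inv_mult:
  fixes A B :: "real^'n^'n"
  assumes "invertible A" "invertible B"
  shows "matrix_inv (A ** B) = matrix_inv B ** matrix_inv A"
proof (rule inv_unique)
  have "A ** B ** (matrix_inv B ** matrix_inv A) = A ** (B ** matrix_inv B) ** matrix_inv A"
    by (simp add: matrix_mul_assoc)
  also have "\<dots> = mat 1" using inv_props(1)[OF assms(1)] inv_props(1)[OF assms(2)]
    by (simp add: matrix_mul_rid)
  finally show "A ** B ** (matrix_inv B ** matrix_inv A) = mat 1" .
qed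

lemma cs_psd:
  fixes G :: "real^'n^'n"
  assumes sym: "sym_mat G" and psd: "\<And>z. 0 \<le> z \<bullet> (G *v z)"
  shows "(u \<bullet> (G *v v))^2 \<le> (u \<bullet> (G *v u)) * (v \<bullet> (G *v v))"
proof -
  define a where "a = u \<bullet> (G *v u)"
  define b where "b = u \<bullet> (G *v v)"
  define c where "c = v \<bullet> (G *v v)"
  have vu: "v \<bullet> (G *v u) = b" using sym_dot[OF sym, of v u] b_def by (simp add: inner_commute)
  have f: "0 \<le> a + 2*t*b + t^2*c" for t
  proof -
    have "0 \<le> (u + t *\<^sub>R v) \<bullet> (G *v (u + t *\<^sub>R v))" by (rule psd)
    also have "\<dots> = a + 2*t*b + t^2*c"
      using vu by (simp add: matrix_vector_right_distrib matrix_vector_mult_scaleR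
          inner_add_left inner_add_right a_def b_def c_def algebra_simps power2_eq_square)
    finally show ?thesis .
  qed
  have c0: "c \<ge> 0" using psd c_def by simp
  show ?thesis
  proof (cases "c = 0")
    case True
    have "b = 0"
    proof (rule ccontr)
      assume "b \<noteq> 0"
      from f[of "-(a+1)/(2*b)"] True show False using \<open>b\<noteq>0\<close> by (simp add: field_simps)
    qed
    then show ?thesis using True b_def c_def by simp
  next
    case False
    hence cp: "c > 0" using c0 by simp
    from f[of "-b/c"] have "0 \<le> a - b^2/c" using cp by (simp add: field_simps power2_eq_square)
    hence "b^2 \<le> a * c" using cp by (simp add: field_simps)
    then show ?thesis using a_def b_def c_def by simp
  qed
qed

lemma transpose_add': "transpose ((A::real^'n^'m) + B) = transpose A + transpose B"
  by (simp add: transpose_def vec_eq_iff)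

lemma psd_zero:
  fixes Om :: "real^'n^'n"
  assumes Osym: "sym_mat Om" and Opsd: "\<And>x. 0 \<le> x \<bullet> (Om *v x)"
    and "v \<bullet> (Om *v v) = 0"
  shows "Om *v v = 0"
proof -
  have "((Om *v v) \<bullet> (Om *v v))^2 \<le> ((Om *v v) \<bullet> (Om *v (Om *v v))) * (v \<bullet> (Om *v v))"
    by (rule cs_psd[OF Osym Opsd])
  then have "((Om *v v) \<bullet> (Om *v v))^2 \<le> 0" using assms(3) by simp
  then show ?thesis by simp
qed

lemma step_lemma:
  fixes P Om :: "real^'n^'n"
  assumes Psym: "sym_mat P" and Ppsd: "\<And>x. 0 \<le> x \<bullet> (P *v x)"
    and Osym: "sym_mat Om" and Opsd: "\<And>x. 0 \<le> x \<bullet> (Om *v x)"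
  defines "A \<equiv> matrix_inv (mat 1 + P ** Om) ** P"
  shows "sym_mat A" "\<And>x. 0 \<le> x \<bullet> (A *v x)" "\<And>x. x \<bullet> (A *v x) \<le> x \<bullet> (P *v x)"
    "\<And>G x. (\<And>y. (P *v y) \<bullet> (G *v (P *v y)) \<le> y \<bullet> (P *v y)) \<Longrightarrow>
        (A *v x) \<bullet> (G *v (A *v x)) + (A *v x) \<bullet> (Om *v (A *v x)) \<le> x \<bullet> (A *v x)"
proof -
  define K where "K = mat 1 + P ** Om"
  have Kv: "K *v v = v + P *v (Om *v v)" for v
    by (simp add: K_def matrix_vector_mult_add_rdistrib matrix_vector_mul_assoc)
  have Kinv: "invertible K"
    unfolding invertible_ker
  proof (intro allI impI)
    fix v assume "K *v v = 0"
    hence v: "v = - (P *v (Om *v v))" using Kv by (simp add: eq_neg_iff_add_eq_0)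
    have "v \<bullet> (Om *v v) = (Om *v v) \<bullet> v" by (simp add: inner_commute)
    also have "\<dots> = - ((Om *v v) \<bullet> (P *v (Om *v v)))" by (subst v) (simp add: inner_minus_right)
    finally have "v \<bullet> (Om *v v) \<le> 0" using Ppsd[of "Om *v v"] by simp
    hence "v \<bullet> (Om *v v) = 0" using Opsd[of v] by simp
    hence "Om *v v = 0" by (rule psd_zero[OF Osym Opsd])
    thus "v = 0" using v by simp
  qed
  define B where "B = matrix_inv K"
  have BK: "B ** K = mat 1" and KB: "K ** B = mat 1" using inv_props[OF Kinv] B_def by auto
  have KT: "transpose K = mat 1 + Om ** P"
    using Psym Osym by (simp add: K_def transpose_add' transpose_mat matrix_transpose_mul sym_mat_def)
  have KTB: "transpose K ** transpose B = mat 1"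
    by (metis BK matrix_transpose_mul transpose_mat)
  have A_eq: "A = B ** P" by (simp add: A_def B_def K_def)
  have key: "x = u + Om *v (P *v u) \<and> A *v x = P *v u \<and> transpose A *v x = P *v u"
    if "u = transpose B *v x" for x u
  proof -
    have x: "x = u + Om *v (P *v u)"
    proof -
      have "x = (transpose K ** transpose B) *v x" using KTB by (simp add: matrix_vector_mul_lid)
      also have "\<dots> = transpose K *v u" using that by (simp add: matrix_vector_mul_assoc)
      also have "\<dots> = u + Om *v (P *v u)"
        by (simp add: KT matrix_vector_mult_add_rdistrib matrix_vector_mul_assoc)
      finally show ?thesis .
    qed
    have "A *v x = B *v (P *v x)" by (simp add: A_eq matrix_vector_mul_assoc)
    also have "P *v x = K *v (P *v u)"
      by (subst x) (simp add: Kv matrix_vector_right_distrib)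
    also have "B *v (K *v (P *v u)) = P *v u"
      by (metis BK matrix_vector_mul_assoc matrix_vector_mul_lid)
    finally have Ax: "A *v x = P *v u" .
    have "transpose A = P ** transpose B"
      using Psym by (simp add: A_eq matrix_transpose_mul sym_mat_def)
    hence "transpose A *v x = P *v u" using that by (simp add: matrix_vector_mul_assoc)
    with x Ax show ?thesis by simp
  qed
  show "sym_mat A" unfolding sym_mat_def matrix_eq using key by metis
  have expand: "x \<bullet> (A *v x) = u \<bullet> (P *v u) + (P *v u) \<bullet> (Om *v (P *v u))
      \<and> x \<bullet> (P *v x) = u \<bullet> (P *v u) + 2 * ((P *v u) \<bullet> (Om *v (P *v u)))
          + (Om *v (P *v u)) \<bullet> (P *v (Om *v (P *v u)))"
    if "u = transpose B *v x" for x u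
  proof -
    have x: "x = u + Om *v (P *v u)" and Ax: "A *v x = P *v u" using key[OF that] by auto
    have s1: "u \<bullet> (P *v z) = (P *v u) \<bullet> z" for z using sym_dot[OF Psym] .
    have s2: "(Om *v z) \<bullet> y = z \<bullet> (Om *v y)" for z y using sym_dot[OF Osym] by simp
    have "x \<bullet> (A *v x) = (u + Om *v (P *v u)) \<bullet> (P *v u)" using x Ax by simp
    also have "\<dots> = u \<bullet> (P *v u) + (P *v u) \<bullet> (Om *v (P *v u))"
      by (simp only: inner_add_left s2)
    finally have e1: "x \<bullet> (A *v x) = u \<bullet> (P *v u) + (P *v u) \<bullet> (Om *v (P *v u))" .
    have "x \<bullet> (P *v x) = (u + Om *v (P *v u)) \<bullet> (P *v u + P *v (Om *v (P *v u)))"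
      by (subst (1 2) x) (simp add: matrix_vector_right_distrib)
    also have "\<dots> = u \<bullet> (P *v u) + 2 * ((P *v u) \<bullet> (Om *v (P *v u)))
          + (Om *v (P *v u)) \<bullet> (P *v (Om *v (P *v u)))"
      by (simp only: inner_add_left inner_add_right s1 s2)
    finally show ?thesis using e1 by simp
  qed
  show "0 \<le> x \<bullet> (A *v x)" for x
    using expand[OF refl, of x] Ppsd[of "transpose B *v x"] Opsd[of "P *v (transpose B *v x)"]
    by simp
  show "x \<bullet> (A *v x) \<le> x \<bullet> (P *v x)" for x
    using expand[OF refl, of x] Ppsd[of "Om *v (P *v (transpose B *v x))"]
      Opsd[of "P *v (transpose B *v x)"]
    by simp
  show "(A *v x) \<bullet> (G *v (A *v x)) + (A *v x) \<bullet> (Om *v (A *v x)) \<le> x \<bullet> (A *v x)"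
    if h: "\<And>y. (P *v y) \<bullet> (G *v (P *v y)) \<le> y \<bullet> (P *v y)" for G x
    using expand[OF refl, of x] key[OF refl, of x] h[of "transpose B *v x"] by simp
qed

lemma congr_qf:
  fixes C :: "real^'n^'m" and X :: "real^'n^'n"
  shows "x \<bullet> ((C ** X ** transpose C) *v x) = (transpose C *v x) \<bullet> (X *v (transpose C *v x))"
  by (simp add: matrix_vector_mul_assoc[symmetric] dot_transp)

lemma R_facts:
  fixes R :: "real^'d^'d"
  assumes "pos_def R"
  shows "invertible R" "sym_mat (matrix_inv R)" "\<And>y. 0 \<le> y \<bullet> (matrix_inv R *v y)"
proof -
  have Rs: "sym_mat R" and Rp: "\<And>x. x \<noteq> 0 \<Longrightarrow> x \<bullet> (R *v x) > 0"
    using assms by (auto simp: pos_def_def)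
  show inv: "invertible R" unfolding invertible_ker
  proof (intro allI impI)
    fix x assume "R *v x = 0" thus "x = 0" using Rp[of x] by auto
  qed
  show "sym_mat (matrix_inv R)"
    using inv_transpose[OF inv] Rs by (simp add: sym_mat_def)
  fix y
  define z where "z = matrix_inv R *v y"
  have "R *v z = y" using inv_props(1)[OF inv]
    by (simp add: z_def matrix_vector_mul_assoc matrix_vector_mul_lid)
  hence "y \<bullet> (matrix_inv R *v y) = z \<bullet> (R *v z)"
    using sym_dot[OF Rs, of z z] by (simp add: z_def inner_commute)
  moreover have "0 \<le> z \<bullet> (R *v z)" using Rp[of z] by (cases "z = 0") auto
  ultimately show "0 \<le> y \<bullet> (matrix_inv R *v y)" by simp
qed

lemma Omega_qf:
  "x \<bullet> (Omega H R k *v x) = (H k *v x) \<bullet> (matrix_inv (R k) *v (H k *v x))"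
  unfolding Omega_def by (simp add: matrix_vector_mul_assoc[symmetric] dot_transp)

lemma Omega_facts:
  assumes "pos_def (R k)"
  shows "sym_mat (Omega H R k)" "\<And>x. 0 \<le> x \<bullet> (Omega H R k *v x)"
proof -
  show "sym_mat (Omega H R k)"
    using R_facts(2)[OF assms]
    by (simp add: sym_mat_def Omega_def matrix_transpose_mul matrix_mul_assoc)
  show "0 \<le> x \<bullet> (Omega H R k *v x)" for x
    using R_facts(3)[OF assms] by (simp add: Omega_qf)
qed

lemma mprod_inv:
  assumes "\<And>j. j \<ge> 1 \<Longrightarrow> invertible (M j)"
  shows "invertible (mprod M k l)"
proof (induction k)
  case 0 then show ?case by (simp add: invertible_def matrix_mul_lid)
next
  case (Suc k) then show ?case using assms[of "Suc k"]
    by (auto simp: invertible_def matrix_mul_lid intro: invertible_mult[unfolded invertible_def])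
qed

lemma mprod_self: "mprod M k k = mat 1"
  by (cases k) auto

lemma sum_mv:
  fixes f :: "'a \<Rightarrow> real^'n^'m"
  assumes "finite S"
  shows "(sum f S) *v x = (\<Sum>l\<in>S. f l *v x)"
  using assms
proof (induction S rule: finite_induct)
  case empty then show ?case by (simp add: matrix_vector_mult_def vec_eq_iff)
next
  case (insert a S) then show ?case by (simp add: matrix_vector_mult_add_rdistrib)
qed

lemma transpose_sum: "transpose (sum f S) = (\<Sum>l\<in>S. transpose (f l :: real^'n^'m))"
  by (simp add: transpose_def vec_eq_iff sum_component)

lemma Gamma_qf:
  "x \<bullet> (Gamma M H R k *v x) = (\<Sum>l<k. (matrix_inv (mprod M k l) *v x) \<bullet>
        (Omega H R l *v (matrix_inv (mprod M k l) *v x)))"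
  unfolding Gamma_def
  by (simp add: sum_mv inner_sum_right matrix_vector_mul_assoc[symmetric] dot_transp)

lemma Gamma_facts:
  assumes R_pd: "\<And>j. pos_def (R j)"
  shows "sym_mat (Gamma M H R k)" "\<And>x. 0 \<le> x \<bullet> (Gamma M H R k *v x)"
proof -
  show "sym_mat (Gamma M H R k)"
    unfolding sym_mat_def Gamma_def transpose_sum
  proof (intro sum.cong refl)
    fix l
    have "transpose (Omega H R l) = Omega H R l" using Omega_facts(1)[where R=R and k=l, OF R_pd[of l]] sym_mat_def by blast
    then show "transpose (transpose (matrix_inv (mprod M k l)) ** Omega H R l ** matrix_inv (mprod M k l))
       = transpose (matrix_inv (mprod M k l)) ** Omega H R l ** matrix_inv (mprod M k l)"
      by (simp add: matrix_transpose_mul matrix_mul_assoc)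
  qed
  show "0 \<le> x \<bullet> (Gamma M H R k *v x)" for x
    unfolding Gamma_qf using Omega_facts(2)[OF R_pd] by (intro sum_nonneg) auto
qed

lemma inv1: "matrix_inv (mat 1 :: real^'n^'n) = mat 1"
  by (simp add: inv_unique matrix_mul_lid)

lemma Gamma_Suc:
  assumes M_inv: "\<And>j. j \<ge> 1 \<Longrightarrow> invertible (M j)"
  shows "y \<bullet> (Gamma M H R (Suc k) *v y) =
     (matrix_inv (M (Suc k)) *v y) \<bullet> (Gamma M H R k *v (matrix_inv (M (Suc k)) *v y))
     + (matrix_inv (M (Suc k)) *v y) \<bullet> (Omega H R k *v (matrix_inv (M (Suc k)) *v y))"
proof -
  define Mi where "Mi = matrix_inv (M (Suc k))"
  have Mi: "invertible (M (Suc k))" using M_inv by simp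
  have T: "matrix_inv (M (Suc k) ** mprod M k l) *v y = matrix_inv (mprod M k l) *v (Mi *v y)"
    for l
  proof -
    have "matrix_inv (M (Suc k) ** mprod M k l) = matrix_inv (mprod M k l) ** Mi"
      using inv_mult[OF Mi mprod_inv[OF M_inv]] Mi_def by simp
    thus ?thesis by (simp add: matrix_vector_mul_assoc)
  qed
  have Tk: "matrix_inv (M (Suc k) ** mprod M k k) = Mi"
    by (simp add: mprod_self matrix_mul_rid Mi_def del: mprod.simps)
  show ?thesis
    unfolding Gamma_qf by (simp add: T mprod_self Mi_def matrix_mul_rid inv1 matrix_vector_mul_lid)
qed

lemma zmv: "(0::real^'n^'m) *v z = 0"
  by (simp add: matrix_vector_mult_def vec_eq_iff)

lemma invariant:
  assumes M_inv: "\<And>j. j \<ge> 1 \<Longrightarrow> invertible (M j)"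
    and R_pd: "\<And>j. pos_def (R j)"
    and P0_psd: "pos_semidef P0"
  shows "sym_mat (Pseq M H R P0 k) \<and> (\<forall>x. 0 \<le> x \<bullet> (Pseq M H R P0 k *v x))
     \<and> (\<forall>y. (Pseq M H R P0 k *v y) \<bullet> (Gamma M H R k *v (Pseq M H R P0 k *v y))
             \<le> y \<bullet> (Pseq M H R P0 k *v y))
     \<and> (\<forall>x. x \<bullet> (Pseq M H R P0 k *v x)
             \<le> x \<bullet> ((mprod M k 0 ** P0 ** transpose (mprod M k 0)) *v x))"
proof (induction k)
  case 0
  have G0: "Gamma M H R 0 = 0" by (simp add: Gamma_def)
  show ?case using P0_psd
    by (simp add: pos_semidef_def G0 matrix_mul_lid matrix_mul_rid transpose_mat zmv)
next
  case (Suc k)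
  define P where "P = Pseq M H R P0 k"
  define Om where "Om = Omega H R k"
  define A where "A = matrix_inv (mat 1 + P ** Om) ** P"
  define Mk where "Mk = M (Suc k)"
  have Ps: "sym_mat P" and Pp: "\<And>x. 0 \<le> x \<bullet> (P *v x)"
    and PG: "\<And>y. (P *v y) \<bullet> (Gamma M H R k *v (P *v y)) \<le> y \<bullet> (P *v y)"
    and Pb: "\<And>x. x \<bullet> (P *v x) \<le> x \<bullet> ((mprod M k 0 ** P0 ** transpose (mprod M k 0)) *v x)"
    using Suc.IH by (auto simp: P_def)
  have Os: "sym_mat Om" and Op: "\<And>x. 0 \<le> x \<bullet> (Om *v x)"
    using Omega_facts[where R=R and k=k, OF R_pd[of k]] by (auto simp: Om_def)
  note st = step_lemma[OF Ps Pp Os Op, folded A_def]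
  have Peq: "Pseq M H R P0 (Suc k) = Mk ** A ** transpose Mk"
    by (simp add: P_def Om_def A_def Mk_def matrix_mul_assoc)
  have qf: "x \<bullet> (Pseq M H R P0 (Suc k) *v x) = (transpose Mk *v x) \<bullet> (A *v (transpose Mk *v x))" for x
    unfolding Peq by (rule congr_qf)
  have sym': "sym_mat (Pseq M H R P0 (Suc k))"
    using st(1) unfolding Peq sym_mat_def by (simp add: matrix_transpose_mul matrix_mul_assoc)
  have psd': "\<forall>x. 0 \<le> x \<bullet> (Pseq M H R P0 (Suc k) *v x)"
    using st(2) qf by simp
  have mp: "mprod M (Suc k) 0 = Mk ** mprod M k 0" by (simp add: Mk_def)
  have bnd: "\<forall>x. x \<bullet> (Pseq M H R P0 (Suc k) *v x)
             \<le> x \<bullet> ((mprod M (Suc k) 0 ** P0 ** transpose (mprod M (Suc k) 0)) *v x)"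
  proof
    fix x
    have e: "mprod M (Suc k) 0 ** P0 ** transpose (mprod M (Suc k) 0)
        = Mk ** (mprod M k 0 ** P0 ** transpose (mprod M k 0)) ** transpose Mk"
      unfolding mp matrix_transpose_mul by (simp add: matrix_mul_assoc)
    show "x \<bullet> (Pseq M H R P0 (Suc k) *v x)
             \<le> x \<bullet> ((mprod M (Suc k) 0 ** P0 ** transpose (mprod M (Suc k) 0)) *v x)"
      unfolding qf e by (subst congr_qf[where C=Mk]) (rule order_trans[OF st(3) Pb])
  qed
  have pgp: "\<forall>y. (Pseq M H R P0 (Suc k) *v y) \<bullet> (Gamma M H R (Suc k) *v (Pseq M H R P0 (Suc k) *v y))
             \<le> y \<bullet> (Pseq M H R P0 (Suc k) *v y)"
  proof
    fix y
    define z where "z = transpose Mk *v y"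
    have Mi: "invertible Mk" using M_inv Mk_def by simp
    have "matrix_inv Mk *v (Pseq M H R P0 (Suc k) *v y) = A *v z"
      unfolding Peq z_def
      by (metis inv_props(2)[OF Mi] matrix_vector_mul_assoc matrix_vector_mul_lid)
    then have "(Pseq M H R P0 (Suc k) *v y) \<bullet> (Gamma M H R (Suc k) *v (Pseq M H R P0 (Suc k) *v y))
        = (A *v z) \<bullet> (Gamma M H R k *v (A *v z)) + (A *v z) \<bullet> (Om *v (A *v z))"
      by (simp add: Gamma_Suc[OF M_inv] Mk_def Om_def)
    also have "\<dots> \<le> z \<bullet> (A *v z)" by (rule st(4)[OF PG])
    also have "\<dots> = y \<bullet> (Pseq M H R P0 (Suc k) *v y)" unfolding z_def by (rule qf[symmetric])
    finally show "(Pseq M H R P0 (Suc k) *v y) \<bullet> (Gamma M H R (Suc k) *v (Pseq M H R P0 (Suc k) *v y))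
             \<le> y \<bullet> (Pseq M H R P0 (Suc k) *v y)" .
  qed
  show ?case using sym' psd' pgp bnd by blast
qed

lemma final_bound:
  fixes P G :: "real^'n^'n"
  assumes Ps: "sym_mat P" and Pp: "\<And>x. 0 \<le> x \<bullet> (P *v x)"
    and Gs: "sym_mat G" and Gp: "\<And>x. 0 \<le> x \<bullet> (G *v x)" and Gi: "invertible G"
    and h: "\<And>y. (P *v y) \<bullet> (G *v (P *v y)) \<le> y \<bullet> (P *v y)"
  shows "x \<bullet> (P *v x) \<le> x \<bullet> (matrix_inv G *v x)"
proof -
  define u where "u = P *v x"
  define v where "v = matrix_inv G *v x"
  have Gv: "G *v v = x" using inv_props(1)[OF Gi]
    by (simp add: v_def matrix_vector_mul_assoc matrix_vector_mul_lid)
  define a where "a = x \<bullet> (P *v x)"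
  define b where "b = x \<bullet> (matrix_inv G *v x)"
  have a: "a = u \<bullet> (G *v v)" by (simp add: a_def u_def Gv inner_commute)
  have b: "v \<bullet> (G *v v) = b" unfolding Gv by (simp add: b_def v_def inner_commute)
  have "a^2 \<le> (u \<bullet> (G *v u)) * b" using cs_psd[OF Gs Gp, of u v] a b by simp
  also have "\<dots> \<le> a * b"
    using h[of x] b Gp[of v] by (intro mult_right_mono) (auto simp: a_def u_def)
  finally have "a^2 \<le> a * b" .
  moreover have "a \<ge> 0" using Pp a_def by simp
  moreover have b0: "b \<ge> 0" using Gp[of v] b by simp
  ultimately have "a \<le> b"
  proof (cases "a = 0")
    case False
    with \<open>a \<ge> 0\<close> have "a > 0" by simp
    moreover have "a * a \<le> a * b" using \<open>a^2 \<le> a * b\<close> by (simp add: power2_eq_square)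
    ultimately show ?thesis by (simp add: mult_le_cancel_left_pos)
  qed (use b0 in simp)
  then show ?thesis by (simp add: a_def b_def)
qed

theorem mainTheorem3:
  fixes M :: "nat \<Rightarrow> real^'n^'n" and H :: "nat \<Rightarrow> real^'n^'d"
    and R :: "nat \<Rightarrow> real^'d^'d" and P0 :: "real^'n^'n" and k :: nat
  assumes M_inv: "\<And>j. j \<ge> 1 \<Longrightarrow> invertible (M j)"
    and R_pd: "\<And>j. pos_def (R j)"
    and P0_psd: "pos_semidef P0"
  shows "(det (Gamma M H R k) \<noteq> 0 \<longrightarrow>
            loewner_le (Pseq M H R P0 k) (matrix_inv (Gamma M H R k))
          \<and> (\<forall>x::real^'n. x \<bullet> (Pseq M H R P0 k *v x)
                \<le> min (x \<bullet> ((mprod M k 0 ** P0 ** transpose (mprod M k 0)) *v x))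
                      (x \<bullet> (matrix_inv (Gamma M H R k) *v x))))
      \<and> (\<forall>L. pos_def L \<and> loewner_le L (Gamma M H R k)
              \<longrightarrow> loewner_le (Pseq M H R P0 k) (matrix_inv L))"
proof -
  define P where "P = Pseq M H R P0 k"
  define G where "G = Gamma M H R k"
  have inv: "sym_mat P" "\<And>x. 0 \<le> x \<bullet> (P *v x)"
    "\<And>y. (P *v y) \<bullet> (G *v (P *v y)) \<le> y \<bullet> (P *v y)"
    "\<And>x. x \<bullet> (P *v x) \<le> x \<bullet> ((mprod M k 0 ** P0 ** transpose (mprod M k 0)) *v x)"
    using invariant[where k=k, OF M_inv R_pd P0_psd] by (auto simp: P_def G_def)
  have Gs: "sym_mat G" and Gp: "\<And>x. 0 \<le> x \<bullet> (G *v x)"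
    using Gamma_facts[OF R_pd] by (auto simp: G_def)
  have part1: "det G \<noteq> 0 \<longrightarrow> loewner_le P (matrix_inv G)
       \<and> (\<forall>x::real^'n. x \<bullet> (P *v x)
                \<le> min (x \<bullet> ((mprod M k 0 ** P0 ** transpose (mprod M k 0)) *v x))
                      (x \<bullet> (matrix_inv G *v x)))"
  proof
    assume "det G \<noteq> 0"
    hence Gi: "invertible G" by (simp add: invertible_det_nz)
    have b: "x \<bullet> (P *v x) \<le> x \<bullet> (matrix_inv G *v x)" for x
      by (rule final_bound[OF inv(1,2) Gs Gp Gi inv(3)])
    show "loewner_le P (matrix_inv G)
       \<and> (\<forall>x::real^'n. x \<bullet> (P *v x)
                \<le> min (x \<bullet> ((mprod M k 0 ** P0 ** transpose (mprod M k 0)) *v x))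
                      (x \<bullet> (matrix_inv G *v x)))"
      using b inv(4) by (simp add: loewner_le_def)
  qed
  have part2: "\<forall>L. pos_def L \<and> loewner_le L G \<longrightarrow> loewner_le P (matrix_inv L)"
  proof (intro allI impI)
    fix L :: "real^'n^'n" assume hL: "pos_def L \<and> loewner_le L G"
    have Ls: "sym_mat L" and Lp: "\<And>x. x \<noteq> 0 \<Longrightarrow> 0 < x \<bullet> (L *v x)"
      using hL by (auto simp: pos_def_def)
    have Lp': "0 \<le> x \<bullet> (L *v x)" for x using Lp[of x] by (cases "x = 0") auto
    have Li: "invertible L" unfolding invertible_ker
    proof (intro allI impI)
      fix x assume "L *v x = 0" thus "x = 0" using Lp[of x] by auto
    qed
    have LG: "y \<bullet> (L *v y) \<le> y \<bullet> (G *v y)" for y using hL by (simp add: loewner_le_def)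
    have h: "(P *v y) \<bullet> (L *v (P *v y)) \<le> y \<bullet> (P *v y)" for y
      using LG[of "P *v y"] inv(3)[of y] by simp
    show "loewner_le P (matrix_inv L)"
      unfolding loewner_le_def using final_bound[OF inv(1,2) Ls Lp' Li h] by blast
  qed
  show ?thesis using part1 part2 by (simp add: P_def G_def)
qed

end
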